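(* Fix $n$ and $p$. Among all categorial sequential allocation mechanisms (with any assignment of agents as optimistic or pessimistic), serial dictatorships with all agents optimistic have the smallest worst-case utilitarian rank, and they have the largest worst-case egalitarian rank (namely $n^p$).
   Context: Basic categorized domain: $n$ agents, $p$ categories $D_i=\{1,\ldots,n\}$ of indivisible items, bundles $\mathfrak D=D_1\times\cdots\times D_p$; each agent $j$ has a linear order $R_j$ over $\mathfrak D$; a profile is $P_n=(R_1,\ldots,R_n)$. $\mathrm{Rank}(R,\vec d)$ is the position of $\vec d$ in $R$ (top $=1$, bottom $=n^p$). CSAM $f_\mathcal O$: given a linear order $\mathcal O$ over $\{1,\ldots,n\}\times\{1,\ldots,p\}$, in rounds $t=1,\ldots,np$, if the $t$-th element of $\mathcal O$ is $(j,i)$ then agent $j$ chooses an item $d_{j,i}$ from $D_{i,t}$, the items of $D_i$ not yet chosen at the start of round $t$. Agent $j$ receives $f^j_\mathcal O(P_n)=(d_{j,1},\ldots,d_{j,p})$. Each agent is fixed in advance to be optimistic or pessimistic. When agent $j$ chooses from $D_i$ in round $t$, a bundle is available to her if for each category $l$ from which she has already chosen its $l$-th component equals $d_{j,l}$, and for each other category $l$ its $l$-th component lies in $D_{l,t}$. An optimistic agent chooses the $i$-th component of her top-ranked available bundle. A pessimistic agent chooses the $d\in D_{i,t}$ for which her lowest-ranked available bundle with $i$-th component $d$ is highest in $R_j$. A serial dictatorship CSAM is one where $\mathcal O=(j_1,1)\rhd(j_1,2)\rhd\cdots\rhd(j_1,p)\rhd\cdots\rhd(j_n,1)\rhd\cdots\rhd(j_n,p)$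 for some ordering $j_1,\ldots,j_n$ of the agents. For a CSAM with a given assignment of types, the worst-case utilitarian rank is $\max_{P_n}\sum_{j=1}^n\mathrm{Rank}(R_j,f^j_\mathcal O(P_n))$ and the worst-case egalitarian rank is $\max_{P_n}\max_{j}\mathrm{Rank}(R_j,f^j_\mathcal O(P_n))$, maxima over all profiles of $n$ agents. *)

theory Defs
  imports Main
begin

text \<open>Conventions: agents are 0..<n, categories are 0..<p, the items of every
category are 0..<n (shifted by one w.r.t. the paper). A bundle is a list of
length p whose l-th entry is the item from category l.  A linear order over
bundles is a list enumerating all bundles without repetition, best first.\<close>

definition bundles :: "nat \<Rightarrow> nat \<Rightarrow> nat list set" where
  "bundles n p = {b. length b = p \<and> (\<forall>l<p. b ! l < n)}"

definition is_linorder :: "nat \<Rightarrow> nat \<Rightarrow> nat list list \<Rightarrow> bool" where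
  "is_linorder n p R \<longleftrightarrow> distinct R \<and> set R = bundles n p"

definition rank :: "nat list list \<Rightarrow> nat list \<Rightarrow> nat" where
  "rank R b = Suc (LEAST k. k < length R \<and> R ! k = b)"

definition valid_profile :: "nat \<Rightarrow> nat \<Rightarrow> (nat \<Rightarrow> nat list list) \<Rightarrow> bool" where
  "valid_profile n p P \<longleftrightarrow> (\<forall>j<n. is_linorder n p (P j))"

definition valid_order :: "nat \<Rightarrow> nat \<Rightarrow> (nat \<times> nat) list \<Rightarrow> bool" where
  "valid_order n p Ord \<longleftrightarrow> distinct Ord \<and> set Ord = {0..<n} \<times> {0..<p}"

definition serial_dictatorship :: "nat \<Rightarrow> nat \<Rightarrow> (nat \<times> nat) list \<Rightarrow> bool" where
  "serial_dictatorship n p Ord \<longleftrightarrow>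
     (\<exists>js. distinct js \<and> set js = {0..<n} \<and>
           Ord = concat (map (\<lambda>j. map (\<lambda>i. (j, i)) [0..<p]) js))"

text \<open>Allocation state: a j i = Some d iff agent j has already chosen item d from category i.\<close>
type_synonym alloc = "nat \<Rightarrow> nat \<Rightarrow> nat option"

definition remaining :: "nat \<Rightarrow> alloc \<Rightarrow> nat \<Rightarrow> nat set" where
  "remaining n a i = {d. d < n \<and> (\<forall>j. a j i \<noteq> Some d)}"

definition available :: "nat \<Rightarrow> nat \<Rightarrow> alloc \<Rightarrow> nat \<Rightarrow> nat list set" where
  "available n p a j = {b \<in> bundles n p. \<forall>l<p.
      (case a j l of Some d \<Rightarrow> b ! l = d | None \<Rightarrow> b ! l \<in> remaining n a l)}"

definition choose_opt :: "nat \<Rightarrow> nat \<Rightarrow> nat list list \<Rightarrow> alloc \<Rightarrow> nat \<Rightarrow> nat \<Rightarrow> nat" where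
  "choose_opt n p R a j i = (ARG_MIN (rank R) b. b \<in> available n p a j) ! i"

definition choose_pess :: "nat \<Rightarrow> nat \<Rightarrow> nat list list \<Rightarrow> alloc \<Rightarrow> nat \<Rightarrow> nat \<Rightarrow> nat" where
  "choose_pess n p R a j i =
     (ARG_MIN (\<lambda>d. Max (rank R ` {b \<in> available n p a j. b ! i = d})) d. d \<in> remaining n a i)"

definition choose_item :: "nat \<Rightarrow> nat \<Rightarrow> (nat \<Rightarrow> bool) \<Rightarrow> nat list list \<Rightarrow> alloc \<Rightarrow> nat \<Rightarrow> nat \<Rightarrow> nat" where
  "choose_item n p opt R a j i =
     (if opt j then choose_opt n p R a j i else choose_pess n p R a j i)"

fun run :: "nat \<Rightarrow> nat \<Rightarrow> (nat \<Rightarrow> bool) \<Rightarrow> (nat \<Rightarrow> nat list list)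
            \<Rightarrow> (nat \<times> nat) list \<Rightarrow> alloc \<Rightarrow> alloc" where
  "run n p opt P [] a = a"
| "run n p opt P ((j, i) # os) a =
     run n p opt P os (a(j := (a j)(i := Some (choose_item n p opt (P j) a j i))))"

definition csam :: "nat \<Rightarrow> nat \<Rightarrow> (nat \<Rightarrow> bool) \<Rightarrow> (nat \<times> nat) list
                    \<Rightarrow> (nat \<Rightarrow> nat list list) \<Rightarrow> nat \<Rightarrow> nat list" where
  "csam n p opt Ord P j = map (\<lambda>i. the (run n p opt P Ord (\<lambda>_ _. None) j i)) [0..<p]"

definition wc_util :: "nat \<Rightarrow> nat \<Rightarrow> (nat \<Rightarrow> bool) \<Rightarrow> (nat \<times> nat) list \<Rightarrow> nat" where
  "wc_util n p opt Ord =
     Max {(\<Sum>j<n. rank (P j) (csam n p opt Ord P j)) | P. valid_profile n p P}"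

definition wc_egal :: "nat \<Rightarrow> nat \<Rightarrow> (nat \<Rightarrow> bool) \<Rightarrow> (nat \<times> nat) list \<Rightarrow> nat" where
  "wc_egal n p opt Ord =
     Max {Max {rank (P j) (csam n p opt Ord P j) | j. j < n} | P. valid_profile n p P}"

end

theory Submission
  imports Defs "HOL-Analysis.Convex"
begin


lemma card_box:
  "card {b::nat list. length b = p \<and> (\<forall>l<p. b ! l \<in> X l)} = (\<Prod>l<p. card (X l))"
proof (induction p arbitrary: X)
  case 0
  then show ?case by simp
next
  case (Suc p)
  have eq: "{b::nat list. length b = Suc p \<and> (\<forall>l<Suc p. b ! l \<in> X l)}
      = (\<lambda>(x,xs). x # xs) ` (X 0 \<times> {b. length b = p \<and> (\<forall>l<p. b ! l \<in> X (Suc l))})"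
  proof (rule set_eqI, rule iffI)
    fix b assume "b \<in> {b::nat list. length b = Suc p \<and> (\<forall>l<Suc p. b ! l \<in> X l)}"
    then obtain x xs where b: "b = x # xs" and "length xs = p" and h: "\<forall>l<Suc p. b ! l \<in> X l"
      by (cases b) auto
    then show "b \<in> (\<lambda>(x,xs). x # xs) ` (X 0 \<times> {b. length b = p \<and> (\<forall>l<p. b ! l \<in> X (Suc l))})"
      by (auto intro!: image_eqI[where x="(x,xs)"])
  next
    fix b assume "b \<in> (\<lambda>(x,xs). x # xs) ` (X 0 \<times> {b. length b = p \<and> (\<forall>l<p. b ! l \<in> X (Suc l))})"
    then show "b \<in> {b::nat list. length b = Suc p \<and> (\<forall>l<Suc p. b ! l \<in> X l)}"
      by (auto simp: less_Suc_eq_0_disj)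
  qed
  have inj: "inj (\<lambda>(x::nat,xs::nat list). x # xs)" by (auto simp: inj_def)
  have "card (X 0) * (\<Prod>l<p. card (X (Suc l))) = (\<Prod>l<Suc p. card (X l))"
    by (rule prod.lessThan_Suc_shift[symmetric])
  then show ?case unfolding eq
    by (simp add: card_image[OF inj_on_subset[OF inj subset_UNIV]] card_cartesian_product Suc.IH del: prod.lessThan_Suc)
qed

lemma bundles_eq: "bundles n p = {b. length b = p \<and> (\<forall>l<p. b ! l \<in> {0..<n})}"
  by (auto simp: bundles_def)

lemma card_bundles: "card (bundles n p) = n ^ p"
  unfolding bundles_eq card_box by simp

lemma finite_bundles: "finite (bundles n p)"
proof -
  have "bundles n p = {xs. set xs \<subseteq> {0..<n} \<and> length xs = p}"
    unfolding bundles_def by (fastforce simp: in_set_conv_nth subset_iff)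
  then show ?thesis by (simp add: finite_lists_length_eq)
qed

lemma rank_nth:
  assumes "distinct R" "k < length R"
  shows "rank R (R ! k) = Suc k"
  unfolding rank_def
proof -
  have "(LEAST i. i < length R \<and> R ! i = R ! k) = k"
    by (rule Least_equality) (use assms nth_eq_iff_index_eq in auto)
  then show "Suc (LEAST i. i < length R \<and> R ! i = R ! k) = Suc k" by simp
qed

lemma rank_props:
  assumes "distinct R" "b \<in> set R"
  shows "1 \<le> rank R b \<and> rank R b \<le> length R \<and> R ! (rank R b - 1) = b"
proof -
  obtain k where "k < length R" "R ! k = b" using assms(2) by (auto simp: in_set_conv_nth)
  then show ?thesis using rank_nth[OF assms(1)] by auto
qed

lemma rank_inj:
  assumes "distinct R" "b \<in> set R" "b' \<in> set R" "rank R b = rank R b'"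
  shows "b = b'"
  using rank_props[OF assms(1,2)] rank_props[OF assms(1,3)] assms(4) by metis

lemma rank_card_ge:
  assumes "distinct R" "c \<in> set R" "A \<subseteq> set R" "\<forall>b\<in>A. rank R c \<le> rank R b"
  shows "card A + rank R c \<le> Suc (length R)"
proof -
  have "inj_on (rank R) A" using rank_inj[OF assms(1)] assms(3) by (auto simp: inj_on_def)
  moreover have "rank R ` A \<subseteq> {rank R c..length R}"
    using assms rank_props[OF assms(1)] by auto
  ultimately have "card A \<le> card {rank R c..length R}"
    by (metis card_image card_mono finite_atLeastAtMost)
  then show ?thesis using rank_props[OF assms(1,2)] by (simp only: card_atLeastAtMost) arith
qed

lemma run_append: "run n p opt P (xs @ ys) a = run n p opt P ys (run n p opt P xs a)"
  by (induction xs arbitrary: a) (auto split: prod.splits)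

lemma run_snoc: "run n p opt P (xs @ [(j,i)]) a =
   (let b = run n p opt P xs a in b(j := (b j)(i := Some (choose_item n p opt (P j) b j i))))"
  by (simp add: run_append Let_def)

lemma run_other: "(j,l) \<notin> set os \<Longrightarrow> run n p opt P os a j l = a j l"
proof (induction os arbitrary: a)
  case Nil then show ?case by simp
next
  case (Cons x os)
  obtain j' i' where x: "x = (j',i')" by (cases x)
  show ?case using Cons x by auto
qed



definition Inv :: "nat \<Rightarrow> alloc \<Rightarrow> (nat \<times> nat) list \<Rightarrow> bool" where
  "Inv n a xs \<longleftrightarrow> (\<forall>j l. (a j l \<noteq> None) = ((j,l) \<in> set xs)) \<and> (\<forall>j l d. a j l = Some d \<longrightarrow> d < n)
     \<and> (\<forall>j j' l d. a j l = Some d \<longrightarrow> a j' l = Some d \<longrightarrow> j = j')"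

lemma rem_nonempty:
  assumes inv: "Inv n a xs" and g: "set xs \<subseteq> {0..<n} \<times> {0..<p}" and j: "j < n" and nin: "(j,l) \<notin> set xs"
  shows "remaining n a l \<noteq> {}"
proof
  assume e: "remaining n a l = {}"
  let ?J = "{j'. (j',l) \<in> set xs}"
  have cov: "{0..<n} \<subseteq> (\<lambda>j'. the (a j' l)) ` ?J"
  proof
    fix d assume "d \<in> {0..<n}"
    then obtain j' where "a j' l = Some d" using e by (auto simp: remaining_def)
    moreover then have "(j',l) \<in> set xs" using inv unfolding Inv_def by blast
    ultimately show "d \<in> (\<lambda>j'. the (a j' l)) ` ?J" by (intro image_eqI[where x=j']) auto
  qed
  have sub: "?J \<subseteq> {0..<n} - {j}" using g nin by auto
  have fin: "finite ?J" using finite_subset[OF sub] by simp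
  have "card ?J \<le> card ({0..<n} - {j})" using card_mono[OF _ sub] by simp
  also have "\<dots> = n - 1" using j by simp
  finally have cJ: "card ?J \<le> n - 1" .
  have "card {0..<n} \<le> card ((\<lambda>j'. the (a j' l)) ` ?J)"
    using fin cov by (intro card_mono) auto
  also have "\<dots> \<le> card ?J" by (rule card_image_le[OF fin])
  finally have "n \<le> n - 1" using cJ by simp
  then show False using j by simp
qed

lemma avail_nonempty:
  assumes inv: "Inv n a xs" and "\<forall>l<p. a j l = None \<longrightarrow> remaining n a l \<noteq> {}"
  shows "available n p a j \<noteq> {}"
proof -
  define b where "b = map (\<lambda>l. case a j l of Some d \<Rightarrow> d | None \<Rightarrow> (SOME d. d \<in> remaining n a l)) [0..<p]"
  have "b \<in> available n p a j"
    unfolding available_def bundles_def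
  proof (intro CollectI conjI allI impI)
    show "length b = p" by (simp add: b_def)
    fix l assume l: "l < p"
    show "b ! l < n"
    proof (cases "a j l")
      case None
      then have "(SOME d. d \<in> remaining n a l) \<in> remaining n a l" using assms(2) l by (simp add: some_in_eq)
      then show ?thesis using None l by (simp add: b_def remaining_def)
    next
      case (Some d) then show ?thesis using inv l by (simp add: b_def Inv_def)
    qed
    show "case a j l of None \<Rightarrow> b ! l \<in> remaining n a l | Some d \<Rightarrow> b ! l = d"
    proof (cases "a j l")
      case None
      then have "(SOME d. d \<in> remaining n a l) \<in> remaining n a l" using assms(2) l by (simp add: some_in_eq)
      then show ?thesis using None l by (simp add: b_def)
    next
      case (Some d) then show ?thesis using l by (simp add: b_def)
    qed
  qed
  then show ?thesis by auto
qed

lemma choose_rem: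
  assumes inv: "Inv n a xs" and g: "set xs \<subseteq> {0..<n} \<times> {0..<p}" and j: "j < n" and i: "i < p"
    and nin: "(j,i) \<notin> set xs"
  shows "choose_item n p opt R a j i \<in> remaining n a i"
proof -
  have rne: "\<forall>l<p. a j l = None \<longrightarrow> remaining n a l \<noteq> {}"
  proof (intro allI impI)
    fix l assume "l < p" "a j l = None"
    moreover have "(a j l \<noteq> None) = ((j,l) \<in> set xs)" using inv unfolding Inv_def by blast
    ultimately have "(j,l) \<notin> set xs" by simp
    then show "remaining n a l \<noteq> {}" by (rule rem_nonempty[OF inv g j])
  qed
  have "(a j i \<noteq> None) = ((j,i) \<in> set xs)" using inv unfolding Inv_def by blast
  then have aji: "a j i = None" using nin by simp
  show ?thesis
  proof (cases "opt j")
    case True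
    obtain b where b: "b \<in> available n p a j" using avail_nonempty[OF inv rne] by auto
    have "(ARG_MIN (rank R) b. b \<in> available n p a j) \<in> available n p a j"
      by (rule arg_min_natI[of "\<lambda>b. b \<in> available n p a j", OF b])
    then have "(ARG_MIN (rank R) b. b \<in> available n p a j) ! i \<in> remaining n a i"
      using aji i unfolding available_def by force
    then show ?thesis using True by (simp add: choose_item_def choose_opt_def)
  next
    case False
    obtain d where d: "d \<in> remaining n a i" using rne aji i by auto
    show ?thesis using False arg_min_natI[of "\<lambda>d. d \<in> remaining n a i", OF d]
      by (simp add: choose_item_def choose_pess_def)
  qed
qed

lemma inv_run:
  assumes "distinct xs" "set xs \<subseteq> {0..<n} \<times> {0..<p}"
  shows "Inv n (run n p opt P xs (\<lambda>_ _. None)) xs"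
  using assms
proof (induction xs rule: rev_induct)
  case Nil
  then show ?case by (simp add: Inv_def)
next
  case (snoc x xs)
  obtain j i where x: "x = (j,i)" by (cases x)
  let ?a = "run n p opt P xs (\<lambda>_ _. None)"
  have inv: "Inv n ?a xs" using snoc by auto
  have g: "set xs \<subseteq> {0..<n} \<times> {0..<p}" "j < n" "i < p" "(j,i) \<notin> set xs" using snoc x by auto
  define c where "c = choose_item n p opt (P j) ?a j i"
  have c: "c \<in> remaining n ?a i" unfolding c_def by (rule choose_rem[OF inv g])
  have eq: "run n p opt P (xs @ [x]) (\<lambda>_ _. None) = ?a(j := (?a j)(i := Some c))"
    by (simp add: x run_snoc c_def Let_def)
  define a' where "a' = ?a(j := (?a j)(i := Some c))"
  have a': "\<And>j' l. a' j' l = (if j' = j \<and> l = i then Some c else ?a j' l)" by (simp add: a'_def)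
  have cr: "c < n" "\<And>j'. ?a j' i \<noteq> Some c" using c by (auto simp: remaining_def)
  have I1: "\<And>j' l. (?a j' l \<noteq> None) = ((j',l) \<in> set xs)" and I2: "\<And>j' l d. ?a j' l = Some d \<Longrightarrow> d < n"
    and I3: "\<And>j1 j2 l d. ?a j1 l = Some d \<Longrightarrow> ?a j2 l = Some d \<Longrightarrow> j1 = j2"
    using inv unfolding Inv_def by blast+
  have "Inv n a' (xs @ [x])" unfolding Inv_def
  proof (intro conjI allI impI)
    fix j' l show "(a' j' l \<noteq> None) = ((j', l) \<in> set (xs @ [x]))"
      using I1[of j' l] g(4) by (auto simp: a' x)
  next
    fix j' l d assume "a' j' l = Some d"
    then show "d < n" using I2 cr by (simp add: a' split: if_splits)
  next
    fix j1 j2 l d assume h: "a' j1 l = Some d" "a' j2 l = Some d"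
    show "j1 = j2"
    proof (cases "j1 = j \<and> l = i")
      case True
      then show ?thesis using h cr by (cases "j2 = j") (auto simp: a')
    next
      case False
      then show ?thesis using h cr I3 by (cases "j2 = j \<and> l = i") (auto simp: a')
    qed
  qed
  then show ?case unfolding eq a'_def .
qed

lemma grid_valid: "valid_order n p Ord \<Longrightarrow> distinct Ord \<and> set Ord = {0..<n} \<times> {0..<p}"
  by (simp add: valid_order_def)

lemma csam_bundle:
  assumes "valid_order n p Ord" "j < n"
  shows "csam n p opt Ord P j \<in> bundles n p"
proof -
  have inv: "Inv n (run n p opt P Ord (\<lambda>_ _. None)) Ord"
    using assms(1) by (intro inv_run) (auto simp: valid_order_def)
  have I1: "\<And>j' l. (run n p opt P Ord (\<lambda>_ _. None) j' l \<noteq> None) = ((j',l) \<in> set Ord)"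
    and I2: "\<And>j' l d. run n p opt P Ord (\<lambda>_ _. None) j' l = Some d \<Longrightarrow> d < n"
    using inv unfolding Inv_def by blast+
  have "\<And>l. l < p \<Longrightarrow> \<exists>d. run n p opt P Ord (\<lambda>_ _. None) j l = Some d \<and> d < n"
  proof -
    fix l assume "l < p"
    then have "(j,l) \<in> set Ord" using assms unfolding valid_order_def by auto
    then obtain d where "run n p opt P Ord (\<lambda>_ _. None) j l = Some d" using I1[of j l] by auto
    then show "\<exists>d. run n p opt P Ord (\<lambda>_ _. None) j l = Some d \<and> d < n" using I2 by blast
  qed
  then show ?thesis by (fastforce simp: csam_def bundles_def)
qed

lemma linorder_len: "is_linorder n p R \<Longrightarrow> length R = n ^ p"
  by (metis card_bundles distinct_card is_linorder_def)

lemma rank_bound: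
  assumes "valid_order n p Ord" "valid_profile n p P" "j < n"
  shows "1 \<le> rank (P j) (csam n p opt Ord P j) \<and> rank (P j) (csam n p opt Ord P j) \<le> n ^ p"
proof -
  have lo: "is_linorder n p (P j)" using assms by (simp add: valid_profile_def)
  then show ?thesis using rank_props[of "P j" "csam n p opt Ord P j"] csam_bundle[OF assms(1,3)]
    linorder_len[OF lo] by (auto simp: is_linorder_def)
qed



definition idx :: "'a list \<Rightarrow> 'a \<Rightarrow> nat" where
  "idx zs y = length (takeWhile (\<lambda>x. x \<noteq> y) zs)"

lemma idx_lt_nth: "y \<in> set zs \<Longrightarrow> idx zs y < length zs \<and> zs ! idx zs y = y"
  by (induction zs) (auto simp: idx_def)

lemma idx_append: "idx (zs @ ws) y = (if y \<in> set zs then idx zs y else length zs + idx ws y)"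
  by (induction zs) (auto simp: idx_def)

lemma idx_Cons_self: "idx (y # ws) y = 0"
  by (simp add: idx_def)

lemma idx_inj: "inj_on (idx zs) (set zs)"
  by (metis idx_lt_nth inj_onI)

lemma idx_image: "distinct zs \<Longrightarrow> idx zs ` set zs = {0..<length zs}"
proof -
  assume d: "distinct zs"
  have "idx zs ` set zs \<subseteq> {0..<length zs}" using idx_lt_nth[of _ zs] by fastforce
  moreover have "card (idx zs ` set zs) = length zs"
    using card_image[OF idx_inj[of zs]] distinct_card[OF d] by simp
  ultimately show ?thesis by (simp add: card_subset_eq)
qed

lemma idx_map: "inj f \<Longrightarrow> idx (map f zs) (f y) = idx zs y"
  by (induction zs) (auto simp: idx_def inj_eq)

definition fl :: "nat \<Rightarrow> (nat \<times> nat) list \<Rightarrow> (nat \<times> nat) list" where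
  "fl l Ord = filter (\<lambda>x. snd x = l) Ord"

definition beta :: "(nat \<times> nat) list \<Rightarrow> nat \<Rightarrow> nat \<Rightarrow> nat" where
  "beta Ord j l = idx (fl l Ord) (j,l)"

lemma fl_set: "valid_order n p Ord \<Longrightarrow> l < p \<Longrightarrow> set (fl l Ord) = {0..<n} \<times> {l}"
  by (auto simp: fl_def valid_order_def)

lemma fl_len: "valid_order n p Ord \<Longrightarrow> l < p \<Longrightarrow> length (fl l Ord) = n"
proof -
  assume a: "valid_order n p Ord" "l < p"
  have "distinct (fl l Ord)" using a by (simp add: fl_def valid_order_def)
  then have "length (fl l Ord) = card (set (fl l Ord))" by (simp add: distinct_card)
  also have "\<dots> = n" using fl_set[OF a] by (simp add: card_cartesian_product)
  finally show ?thesis .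
qed

lemma beta_lt: "valid_order n p Ord \<Longrightarrow> l < p \<Longrightarrow> j < n \<Longrightarrow> beta Ord j l < n"
  using idx_lt_nth[of "(j,l)" "fl l Ord"] fl_set fl_len by (fastforce simp: beta_def)

lemma beta_bij: assumes "valid_order n p Ord" "l < p"
  shows "bij_betw (\<lambda>j. beta Ord j l) {..<n} {..<n}"
proof -
  have d: "distinct (fl l Ord)" using assms by (simp add: fl_def valid_order_def)
  have e: "(\<lambda>j. (j,l)) ` {..<n} = set (fl l Ord)" using fl_set[OF assms] by auto
  have "bij_betw (\<lambda>j. (j,l)) {..<n} (set (fl l Ord))"
    using e by (auto simp: bij_betw_def inj_on_def)
  moreover have "bij_betw (idx (fl l Ord)) (set (fl l Ord)) {..<n}"
    using idx_image[OF d] fl_len[OF assms] idx_inj by (auto simp: bij_betw_def atLeast0LessThan)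
  ultimately have "bij_betw (idx (fl l Ord) \<circ> (\<lambda>j. (j,l))) {..<n} {..<n}"
    by (rule bij_betw_trans)
  then show ?thesis by (simp add: beta_def comp_def)
qed

fun numr :: "nat \<Rightarrow> nat list \<Rightarrow> nat" where
  "numr n [] = 0"
| "numr n (x # xs) = x * n ^ length xs + numr n xs"

lemma numr_lt: "\<forall>x\<in>set b. x < n \<Longrightarrow> numr n b < n ^ length b"
proof (induction b)
  case Nil then show ?case by simp
next
  case (Cons x xs)
  have "x * n ^ length xs + numr n xs < x * n ^ length xs + n ^ length xs" using Cons by simp
  also have "\<dots> = (x + 1) * n ^ length xs" by simp
  also have "\<dots> \<le> n * n ^ length xs" using Cons.prems by (intro mult_right_mono) auto
  finally show ?case by simp
qed

definition cle :: "nat list \<Rightarrow> nat list \<Rightarrow> bool" where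
  "cle b b' \<longleftrightarrow> length b = length b' \<and> (\<forall>l<length b. b ! l \<le> b' ! l)"

lemma numr_mono: "cle b b' \<Longrightarrow> numr n b \<le> numr n b'"
proof (induction b arbitrary: b')
  case Nil then show ?case by (simp add: cle_def)
next
  case (Cons x xs)
  then obtain x' xs' where b': "b' = x' # xs'" by (cases b') (auto simp: cle_def)
  from Cons.prems b' have L: "length xs = length xs'" and A: "\<forall>l<length (x#xs). (x#xs)!l \<le> (x'#xs')!l"
    by (auto simp: cle_def)
  have "x \<le> x'" using A[rule_format, of 0] by simp
  moreover have "cle xs xs'" unfolding cle_def using L A by (metis Suc_less_eq length_Cons nth_Cons_Suc)
  ultimately have "x \<le> x'" "cle xs xs'" by auto
  then show ?case using Cons.IH b' by (simp add: cle_def add_mono)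
qed

lemma numr_strict: "n \<ge> 1 \<Longrightarrow> cle b b' \<Longrightarrow> b \<noteq> b' \<Longrightarrow> numr n b < numr n b'"
proof (induction b arbitrary: b')
  case Nil then show ?case by (simp add: cle_def)
next
  case (Cons x xs)
  then obtain x' xs' where b': "b' = x' # xs'" by (cases b') (auto simp: cle_def)
  from Cons.prems b' have L: "length xs = length xs'" and A: "\<forall>l<length (x#xs). (x#xs)!l \<le> (x'#xs')!l"
    by (auto simp: cle_def)
  have "x \<le> x'" using A[rule_format, of 0] by simp
  moreover have "cle xs xs'" unfolding cle_def using L A by (metis Suc_less_eq length_Cons nth_Cons_Suc)
  ultimately have h: "x \<le> x'" "cle xs xs'" "length xs = length xs'" using L by auto
  show ?case
  proof (cases "x = x'")
    case True
    then have "xs \<noteq> xs'" using Cons.prems b' by simp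
    then show ?thesis using Cons.IH[OF Cons.prems(1) h(2)] b' True h by simp
  next
    case False
    then have "x < x'" using h by simp
    moreover have "n ^ length xs > 0" using Cons.prems by simp
    ultimately have "x * n ^ length xs < x' * n ^ length xs" by simp
    then have "x * n ^ length xs' < x' * n ^ length xs'" using h(3) by simp
    then show ?thesis using numr_mono[OF h(2), of n] b' h by (simp add: add_less_le_mono)
  qed
qed

lemma rank_sorted_less:
  assumes "distinct xs" "b \<in> set xs" "b' \<in> set xs" "f b < f b'"
  shows "rank (sort_key f xs) b < rank (sort_key f xs) b'"
proof -
  let ?R = "sort_key f xs"
  have d: "distinct ?R" using assms by simp
  obtain k where k: "k < length ?R" "?R ! k = b" using assms(2) by (metis in_set_conv_nth set_sort)
  obtain k' where k': "k' < length ?R" "?R ! k' = b'" using assms(3) by (metis in_set_conv_nth set_sort)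
  have s: "sorted (map f ?R)" by simp
  have "k < k'"
  proof (rule ccontr)
    assume "\<not> k < k'"
    then have "(map f ?R) ! k' \<le> (map f ?R) ! k" using s k by (intro sorted_nth_mono) auto
    then show False using k k' assms(4) by simp
  qed
  then show ?thesis using rank_nth[OF d k(1)] rank_nth[OF d k'(1)] k k' by simp
qed

lemma rank_count:
  assumes "distinct R" "c \<in> set R" "\<forall>b\<in>B. b \<in> set R \<and> rank R b < rank R c"
  shows "card B < rank R c"
proof -
  have "inj_on (rank R) B" using rank_inj[OF assms(1)] assms(3) by (auto simp: inj_on_def)
  moreover have "rank R ` B \<subseteq> {1..<rank R c}" using assms rank_props[OF assms(1)] by auto
  ultimately have "card B \<le> card {1..<rank R c}"
    by (metis card_image card_mono finite_atLeastLessThan)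
  then show ?thesis using rank_props[OF assms(1,2)] by (simp only: card_atLeastLessThan) arith
qed



definition fkey :: "nat \<Rightarrow> nat \<Rightarrow> (nat \<Rightarrow> nat) \<Rightarrow> nat list \<Rightarrow> nat" where
  "fkey n p \<beta> b = (if \<forall>l<p. \<beta> l \<le> b ! l then n ^ p else 0) + numr n b"

definition Padv :: "nat \<Rightarrow> nat \<Rightarrow> (nat \<times> nat) list \<Rightarrow> nat \<Rightarrow> nat list list" where
  "Padv n p Ord j = sort_key (fkey n p (beta Ord j)) (List.n_lists p [0..<n])"

lemma nlists_set: "set (List.n_lists p [0..<n]) = bundles n p"
  unfolding set_n_lists bundles_def by (fastforce simp: in_set_conv_nth subset_iff)

lemma nlists_distinct: "distinct (List.n_lists p [0..<n])"
  by (simp add: distinct_n_lists)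

lemma sort_lin: "is_linorder n p (sort_key f (List.n_lists p [0..<n]))"
  by (simp add: is_linorder_def nlists_set nlists_distinct)

lemma Padv_lin: "valid_profile n p (Padv n p Ord)"
  by (simp add: valid_profile_def Padv_def sort_lin)

lemma choice_lemma:
  fixes \<beta> lo hi :: "nat \<Rightarrow> nat"
  assumes R: "R = sort_key (fkey n p \<beta>) (List.n_lists p [0..<n])"
    and av: "available n p a j = {b. length b = p \<and> (\<forall>l<p. lo l \<le> b ! l \<and> b ! l \<le> hi l)}"
    and rem: "remaining n a i = {lo i..hi i}"
    and bnd: "\<forall>l<p. lo l \<le> \<beta> l \<and> \<beta> l \<le> hi l \<and> hi l < n"
    and loi: "lo i = \<beta> i" and i: "i < p"
  shows "choose_item n p opt R a j i = \<beta> i"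
proof -
  let ?f = "fkey n p \<beta>"
  let ?B = "available n p a j"
  have n1: "n \<ge> 1" using bnd i by fastforce
  have Bb: "\<And>b. b \<in> ?B \<Longrightarrow> b \<in> set (List.n_lists p [0..<n])"
    unfolding nlists_set av bundles_def using bnd by fastforce
  have lt: "\<And>b b'. b \<in> ?B \<Longrightarrow> b' \<in> ?B \<Longrightarrow> ?f b < ?f b' \<Longrightarrow> rank R b < rank R b'"
    unfolding R by (rule rank_sorted_less[OF nlists_distinct Bb Bb])
  have numr_b: "\<And>b. b \<in> ?B \<Longrightarrow> numr n b < n ^ p"
  proof -
    fix b assume b: "b \<in> ?B"
    then have "\<forall>x\<in>set b. x < n" using bnd by (auto simp: av in_set_conv_nth) (meson le_less_trans)
    then show "numr n b < n ^ p" using numr_lt b by (fastforce simp: av)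
  qed
  show ?thesis
  proof (cases "opt j")
    case True
    define v where "v = map lo [0..<p]"
    have vB: "v \<in> ?B" using bnd by (auto simp: v_def av)
    define g where "g = (ARG_MIN (rank R) b. b \<in> ?B)"
    have gB: "g \<in> ?B" unfolding g_def by (rule arg_min_natI[of "\<lambda>b. b \<in> ?B", OF vB])
    have gle: "rank R g \<le> rank R v" unfolding g_def by (rule arg_min_nat_le[of "\<lambda>b. b \<in> ?B", OF vB])
    have "g = v"
    proof (rule ccontr)
      assume ne: "g \<noteq> v"
      have cl: "cle v g" using gB by (auto simp: cle_def v_def av)
      have "numr n v < numr n g" by (rule numr_strict[OF n1 cl]) (use ne in auto)
      moreover have "(\<forall>l<p. \<beta> l \<le> v ! l) \<longrightarrow> (\<forall>l<p. \<beta> l \<le> g ! l)"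
        using cl unfolding cle_def by (metis le_trans length_map length_upt minus_nat.diff_0 v_def)
      ultimately have "?f v < ?f g" by (auto simp: fkey_def)
      then show False using lt[OF vB gB] gle by simp
    qed
    then have "g ! i = \<beta> i" using i loi by (simp add: v_def)
    then show ?thesis using True by (simp add: choose_item_def choose_opt_def g_def)
  next
    case False
    define w where "w d = map (\<lambda>l. if l = i then d else hi l) [0..<p]" for d
    let ?S = "\<lambda>d. {b \<in> ?B. b ! i = d}"
    let ?F = "\<lambda>d. Max (rank R ` ?S d)"
    have wB: "\<And>d. d \<in> remaining n a i \<Longrightarrow> w d \<in> ?S d"
      using bnd i by (auto simp: w_def av rem)
    have wflag: "\<And>d. d \<in> remaining n a i \<Longrightarrow> \<forall>l<p. \<beta> l \<le> w d ! l"
      using bnd i loi by (auto simp: w_def rem)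
    have wf: "\<And>d. d \<in> remaining n a i \<Longrightarrow> ?f (w d) = n ^ p + numr n (w d)"
      using wflag by (simp add: fkey_def)
    have Fd: "\<And>d. d \<in> remaining n a i \<Longrightarrow> ?F d = rank R (w d)"
    proof -
      fix d assume d: "d \<in> remaining n a i"
      have "\<And>b. b \<in> ?S d \<Longrightarrow> rank R b \<le> rank R (w d)"
      proof -
        fix b assume b: "b \<in> ?S d"
        show "rank R b \<le> rank R (w d)"
        proof (cases "b = w d")
          case False
          have "?f b < ?f (w d)"
          proof (cases "\<forall>l<p. \<beta> l \<le> b ! l")
            case True
            have "cle b (w d)" using b by (auto simp: cle_def w_def av)
            then have "numr n b < numr n (w d)" using numr_strict[OF n1] False by blast
            then show ?thesis using True wf[OF d] by (simp add: fkey_def)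
          next
            case False
            then have "?f b = numr n b" unfolding fkey_def if_not_P[OF False] by simp
            then show ?thesis using numr_b[of b] b wf[OF d] by simp
          qed
          then show ?thesis using lt[of b "w d"] b wB[OF d] by fastforce
        qed simp
      qed
      moreover have "finite (?S d)"
        by (rule finite_subset[of _ "set (List.n_lists p [0..<n])"]) (use Bb in auto)
      ultimately show "?F d = rank R (w d)" using wB[OF d] by (intro Max_eqI) auto
    qed
    have lo_rem: "lo i \<in> remaining n a i" using rem bnd i by auto
    define g where "g = (ARG_MIN ?F d. d \<in> remaining n a i)"
    have gR: "g \<in> remaining n a i" unfolding g_def by (rule arg_min_natI[of "\<lambda>d. d \<in> remaining n a i", OF lo_rem])
    have gle: "?F g \<le> ?F (lo i)" unfolding g_def by (rule arg_min_nat_le[of "\<lambda>d. d \<in> remaining n a i", OF lo_rem])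
    have "g = lo i"
    proof (rule ccontr)
      assume ne: "g \<noteq> lo i"
      then have "lo i < g" using gR rem by auto
      have cl: "cle (w (lo i)) (w g)" using \<open>lo i < g\<close> by (auto simp: cle_def w_def)
      have "w (lo i) ! i \<noteq> w g ! i" using ne i by (simp add: w_def)
      then have "w (lo i) \<noteq> w g" by auto
      then have "numr n (w (lo i)) < numr n (w g)" using numr_strict[OF n1 cl] by blast
      then have "?f (w (lo i)) < ?f (w g)" using wf[OF lo_rem] wf[OF gR] by simp
      then have "rank R (w (lo i)) < rank R (w g)" using lt wB[OF lo_rem] wB[OF gR] by blast
      then show False using gle Fd[OF lo_rem] Fd[OF gR] by simp
    qed
    then show ?thesis using False loi by (simp add: choose_item_def choose_pess_def g_def)
  qed
qed



lemma fl_append: "fl l (xs @ ys) = fl l xs @ fl l ys"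
  by (simp add: fl_def)

lemma set_fl: "set (fl l xs) = {x \<in> set xs. snd x = l}"
  by (auto simp: fl_def)

lemma adv_run:
  assumes vo: "valid_order n p Ord"
  shows "Ord = xs @ ys \<Longrightarrow> run n p opt (Padv n p Ord) xs (\<lambda>_ _. None)
           = (\<lambda>j l. if (j,l) \<in> set xs then Some (beta Ord j l) else None)"
proof (induction xs arbitrary: ys rule: rev_induct)
  case Nil
  then show ?case by (auto intro!: ext)
next
  case (snoc x xs)
  obtain j i where x: "x = (j,i)" by (cases x)
  have O: "Ord = xs @ x # ys" using snoc.prems by simp
  let ?A = "\<lambda>j l. if (j,l) \<in> set xs then Some (beta Ord j l) else None"
  have IH: "run n p opt (Padv n p Ord) xs (\<lambda>_ _. None) = ?A" using snoc.IH[OF O] .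
  have dO: "distinct Ord" and sO: "set Ord = {0..<n} \<times> {0..<p}" using vo by (auto simp: valid_order_def)
  have nin: "(j,i) \<notin> set xs" using dO O x by auto
  have "(j,i) \<in> set Ord" using O x by simp
  then have ji: "j < n" "i < p" using sO by auto
  have n1: "n \<ge> 1" using ji by simp
  define c where "c l = length (fl l xs)" for l
  have K1: "\<And>j' l. (j',l) \<in> set xs \<Longrightarrow> beta Ord j' l = idx (fl l xs) (j',l)"
    by (simp add: beta_def O fl_append idx_append set_fl)
  have K2: "\<And>l. (j,l) \<notin> set xs \<Longrightarrow> c l \<le> beta Ord j l"
    by (simp add: beta_def O fl_append idx_append set_fl c_def)
  have flx: "fl i (x # ys) = (j,i) # fl i ys" by (simp add: fl_def x)
  have K3: "beta Ord j i = c i"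
    using nin by (simp add: beta_def O fl_append idx_append set_fl c_def flx idx_Cons_self)
  have blt: "\<And>l. l < p \<Longrightarrow> beta Ord j l < n" using beta_lt[OF vo] ji by blast
  have K4: "\<And>l. remaining n ?A l = {c l..<n}"
  proof -
    fix l
    have dfl: "distinct (fl l xs)" using dO O by (simp add: fl_def)
    have "{d. \<exists>j'. ?A j' l = Some d} = idx (fl l xs) ` set (fl l xs)"
    proof (rule set_eqI, rule iffI)
      fix d assume "d \<in> {d. \<exists>j'. ?A j' l = Some d}"
      then obtain j' where "(j',l) \<in> set xs" "d = beta Ord j' l" by (auto split: if_splits)
      then show "d \<in> idx (fl l xs) ` set (fl l xs)" using K1 by (auto simp: set_fl)
    next
      fix d assume "d \<in> idx (fl l xs) ` set (fl l xs)"
      then obtain j' l' where "(j',l') \<in> set xs" "l' = l" "d = idx (fl l xs) (j',l')" by (auto simp: set_fl)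
      then show "d \<in> {d. \<exists>j'. ?A j' l = Some d}" using K1 by auto
    qed
    also have "\<dots> = {0..<c l}" using idx_image[OF dfl] by (simp add: c_def)
    finally have V: "{d. \<exists>j'. ?A j' l = Some d} = {0..<c l}" .
    show "remaining n ?A l = {c l..<n}"
    proof (rule set_eqI)
      fix d
      have "(\<exists>j'. ?A j' l = Some d) = (d < c l)" using V[THEN eqset_imp_iff, of d] by simp
      moreover have "d \<in> remaining n ?A l \<longleftrightarrow> d < n \<and> \<not>(\<exists>j'. ?A j' l = Some d)"
        unfolding remaining_def by blast
      ultimately show "d \<in> remaining n ?A l \<longleftrightarrow> d \<in> {c l..<n}" by auto
    qed
  qed
  define lo where "lo l = (if (j,l) \<in> set xs then beta Ord j l else c l)" for l
  define hi where "hi l = (if (j,l) \<in> set xs then beta Ord j l else n - 1)" for l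
  have av: "available n p ?A j = {b. length b = p \<and> (\<forall>l<p. lo l \<le> b ! l \<and> b ! l \<le> hi l)}"
  proof (rule set_eqI, rule iffI)
    fix b assume "b \<in> available n p ?A j"
    then have b: "length b = p" "\<forall>l<p. b ! l < n"
      "\<forall>l<p. (case ?A j l of Some d \<Rightarrow> b ! l = d | None \<Rightarrow> b ! l \<in> remaining n ?A l)"
      unfolding available_def bundles_def by auto
    show "b \<in> {b. length b = p \<and> (\<forall>l<p. lo l \<le> b ! l \<and> b ! l \<le> hi l)}"
    proof (intro CollectI conjI allI impI)
      show "length b = p" by (rule b(1))
      fix l assume l: "l < p"
      show "lo l \<le> b ! l" using b(3)[rule_format, OF l] K4 by (auto simp: lo_def split: if_splits)
      show "b ! l \<le> hi l" using b(3)[rule_format, OF l] b(2) l by (auto simp: hi_def split: if_splits)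
    qed
  next
    fix b assume "b \<in> {b. length b = p \<and> (\<forall>l<p. lo l \<le> b ! l \<and> b ! l \<le> hi l)}"
    then have b: "length b = p" "\<forall>l<p. lo l \<le> b ! l \<and> b ! l \<le> hi l" by auto
    have "\<forall>l<p. b ! l < n"
    proof (intro allI impI)
      fix l assume l: "l < p"
      show "b ! l < n" using b(2)[rule_format, OF l] blt[OF l] n1 by (auto simp: hi_def split: if_splits)
    qed
    moreover have "\<forall>l<p. (case ?A j l of Some d \<Rightarrow> b ! l = d | None \<Rightarrow> b ! l \<in> remaining n ?A l)"
    proof (intro allI impI)
      fix l assume l: "l < p"
      show "case ?A j l of Some d \<Rightarrow> b ! l = d | None \<Rightarrow> b ! l \<in> remaining n ?A l"
        using b(2)[rule_format, OF l] K4[of l] n1 by (auto simp: lo_def hi_def)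
    qed
    ultimately show "b \<in> available n p ?A j" using b(1) unfolding available_def bundles_def by auto
  qed
  have rem: "remaining n ?A i = {lo i..hi i}" using K4[of i] nin n1 by (auto simp: lo_def hi_def)
  have bnd: "\<forall>l<p. lo l \<le> beta Ord j l \<and> beta Ord j l \<le> hi l \<and> hi l < n"
  proof (intro allI impI)
    fix l assume l: "l < p"
    have "beta Ord j l < n" using blt[OF l] .
    then show "lo l \<le> beta Ord j l \<and> beta Ord j l \<le> hi l \<and> hi l < n"
      using K2[of l] n1 by (auto simp: lo_def hi_def)
  qed
  have loi: "lo i = beta Ord j i" using nin K3 by (simp add: lo_def)
  have ch: "choose_item n p opt (Padv n p Ord j) ?A j i = beta Ord j i"
    by (rule choice_lemma[OF Padv_def av rem bnd loi ji(2)])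
  show ?case
    by (simp add: x run_snoc IH ch) (auto intro!: ext)
qed

lemma adv_csam:
  assumes vo: "valid_order n p Ord" and j: "j < n"
  shows "csam n p opt Ord (Padv n p Ord) j = map (beta Ord j) [0..<p]"
proof -
  have "run n p opt (Padv n p Ord) Ord (\<lambda>_ _. None)
           = (\<lambda>j l. if (j,l) \<in> set Ord then Some (beta Ord j l) else None)"
    by (rule adv_run[OF vo]) simp
  moreover have "\<And>l. l < p \<Longrightarrow> (j,l) \<in> set Ord" using vo j by (auto simp: valid_order_def)
  ultimately show ?thesis by (auto simp: csam_def)
qed

lemma adv_rank:
  assumes vo: "valid_order n p Ord" and j: "j < n"
  shows "n ^ p + 1 \<le> rank (Padv n p Ord j) (csam n p opt Ord (Padv n p Ord) j) + (\<Prod>l<p. (n - beta Ord j l))"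
proof -
  let ?v = "map (beta Ord j) [0..<p]"
  let ?R = "Padv n p Ord j"
  let ?f = "fkey n p (beta Ord j)"
  define S where "S = {b::nat list. length b = p \<and> (\<forall>l<p. b ! l \<in> {beta Ord j l..<n})}"
  have cS: "card S = (\<Prod>l<p. (n - beta Ord j l))" unfolding S_def card_box by simp
  have Ssub: "S \<subseteq> bundles n p" unfolding S_def bundles_def by auto
  have vB: "?v \<in> bundles n p" using beta_lt[OF vo _ j] by (auto simp: bundles_def)
  have fv: "n ^ p \<le> ?f ?v" by (simp add: fkey_def)
  have setR: "set ?R = bundles n p" by (simp add: Padv_def nlists_set)
  have "\<forall>b\<in>bundles n p - S. b \<in> set ?R \<and> rank ?R b < rank ?R ?v"
  proof
    fix b assume b: "b \<in> bundles n p - S"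
    then have "\<not> (\<forall>l<p. beta Ord j l \<le> b ! l)" by (auto simp: S_def bundles_def)
    then have "?f b = numr n b" unfolding fkey_def if_not_P[OF \<open>\<not> _\<close>] by simp
    also have "\<dots> < n ^ p"
    proof -
      have "\<forall>x\<in>set b. x < n" "length b = p" using b by (auto simp: bundles_def in_set_conv_nth)
      then show ?thesis using numr_lt[of b n] by simp
    qed
    finally have "?f b < ?f ?v" using fv by simp
    moreover have bR: "b \<in> set (List.n_lists p [0..<n])" using b nlists_set by auto
    moreover have vR: "?v \<in> set (List.n_lists p [0..<n])" using vB nlists_set by auto
    ultimately have "rank ?R b < rank ?R ?v"
      unfolding Padv_def using rank_sorted_less[OF nlists_distinct] by blast
    then show "b \<in> set ?R \<and> rank ?R b < rank ?R ?v" using b setR by auto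
  qed
  then have "card (bundles n p - S) < rank ?R ?v"
    by (intro rank_count) (auto simp: setR vB Padv_def nlists_distinct nlists_set)
  moreover have "card (bundles n p - S) = n ^ p - card S"
    using Ssub finite_bundles card_bundles by (simp add: card_Diff_subset finite_subset)
  moreover have "card S \<le> n ^ p" using Ssub finite_bundles card_bundles card_mono by metis
  ultimately show ?thesis using adv_csam[OF vo j] cS by simp
qed



definition blk :: "nat \<Rightarrow> nat \<Rightarrow> (nat \<times> nat) list" where
  "blk p j = map (\<lambda>i. (j, i)) [0..<p]"

lemma sd_agent:
  assumes vo: "valid_order n p Osd" and js: "distinct js" "set js = {0..<n}"
    and O: "Osd = concat (map (blk p) js)" and k: "k < n"
    and vp: "valid_profile n p P"
  shows "rank (P (js ! k)) (csam n p (\<lambda>_. True) Osd P (js ! k)) + (n - k) ^ p \<le> n ^ p + 1"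
proof -
  let ?j = "js ! k"
  let ?opt = "\<lambda>_::nat. True"
  have ljs: "length js = n" using js distinct_card by fastforce
  define pre where "pre = concat (map (blk p) (take k js))"
  define post where "post = concat (map (blk p) (drop (Suc k) js))"
  have e: "js = take k js @ ?j # drop (Suc k) js" using k ljs by (intro id_take_nth_drop) simp
  have Odec: "Osd = pre @ blk p ?j @ post"
    unfolding O pre_def post_def by (subst e) simp
  have dO: "distinct Osd" and sO: "set Osd = {0..<n} \<times> {0..<p}" using vo by (auto simp: valid_order_def)
  have dpre: "distinct pre" and spre: "set pre \<subseteq> {0..<n} \<times> {0..<p}" using dO sO Odec by auto
  define a0 where "a0 = run n p ?opt P pre (\<lambda>_ _. None)"
  have inv: "Inv n a0 pre" unfolding a0_def by (rule inv_run[OF dpre spre])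
  have I1: "\<And>j' l. (a0 j' l \<noteq> None) = ((j',l) \<in> set pre)" and I2: "\<And>j' l d. a0 j' l = Some d \<Longrightarrow> d < n"
    and I3: "\<And>j1 j2 l d. a0 j1 l = Some d \<Longrightarrow> a0 j2 l = Some d \<Longrightarrow> j1 = j2"
    using inv unfolding Inv_def by blast+
  have setpre: "\<And>j' l. ((j',l) \<in> set pre) = (j' \<in> set (take k js) \<and> l < p)"
    by (auto simp: pre_def blk_def image_iff)
  have jnot: "?j \<notin> set (take k js)"
  proof
    assume "?j \<in> set (take k js)"
    then obtain i where "i < length (take k js)" "take k js ! i = ?j" by (auto simp: in_set_conv_nth)
    then have "i < k" "js ! i = js ! k" by auto
    then show False using nth_eq_iff_index_eq[OF js(1)] k ljs by force
  qed
  have jnone: "\<And>l. a0 ?j l = None" using I1 setpre jnot by blast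
  have tk: "card (set (take k js)) = k" using js(1) k ljs by (simp add: distinct_card)
  have crem: "\<And>l. l < p \<Longrightarrow> card (remaining n a0 l) = n - k"
  proof -
    fix l assume l: "l < p"
    define V where "V = (\<lambda>j'. the (a0 j' l)) ` set (take k js)"
    have remV: "remaining n a0 l = {0..<n} - V"
    proof (rule set_eqI)
      fix d
      have "(\<exists>j'. a0 j' l = Some d) = (d \<in> V)"
      proof
        assume "\<exists>j'. a0 j' l = Some d"
        then obtain j' where h: "a0 j' l = Some d" by blast
        then have "j' \<in> set (take k js)" using I1[of j' l] setpre by auto
        then show "d \<in> V" using h unfolding V_def by (intro image_eqI[where x=j']) auto
      next
        assume "d \<in> V"
        then obtain j' where "j' \<in> set (take k js)" "d = the (a0 j' l)" unfolding V_def by auto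
        then show "\<exists>j'. a0 j' l = Some d" using I1[of j' l] setpre l by auto
      qed
      then show "d \<in> remaining n a0 l \<longleftrightarrow> d \<in> {0..<n} - V" unfolding remaining_def by auto
    qed
    have "inj_on (\<lambda>j'. the (a0 j' l)) (set (take k js))"
    proof (rule inj_onI)
      fix x y assume "x \<in> set (take k js)" "y \<in> set (take k js)" "the (a0 x l) = the (a0 y l)"
      moreover then obtain dx dy where "a0 x l = Some dx" "a0 y l = Some dy"
        using I1 setpre l by (metis option.exhaust)
      ultimately show "x = y" using I3 by auto
    qed
    then have cV: "card V = k" unfolding V_def using card_image tk by metis
    have "V \<subseteq> {0..<n}"
    proof
      fix d assume "d \<in> V"
      then obtain j' where "j' \<in> set (take k js)" "d = the (a0 j' l)" unfolding V_def by auto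
      then show "d \<in> {0..<n}" using I1[of j' l] I2 setpre l by auto
    qed
    then show "card (remaining n a0 l) = n - k" unfolding remV using cV
      by (simp add: card_Diff_subset finite_subset)
  qed
  define A where "A = available n p a0 ?j"
  have Aeq: "A = {b. length b = p \<and> (\<forall>l<p. b ! l \<in> remaining n a0 l)}"
    unfolding A_def available_def bundles_def using jnone by (auto simp: remaining_def)
  have cA: "card A = (n - k) ^ p" unfolding Aeq card_box using crem by simp
  have "A \<noteq> {}"
  proof
    assume "A = {}"
    then have "(n - k) ^ p = 0" using cA by simp
    then show False using k by simp
  qed
  then obtain b0 where b0: "b0 \<in> A" by auto
  define c where "c = (ARG_MIN (rank (P ?j)) b. b \<in> A)"
  have cA': "c \<in> A" unfolding c_def by (rule arg_min_natI[of "\<lambda>b. b \<in> A", OF b0])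
  have cmin: "\<And>b. b \<in> A \<Longrightarrow> rank (P ?j) c \<le> rank (P ?j) b"
    unfolding c_def by (rule arg_min_nat_le)
  have "?j \<in> set js" using k ljs by simp
  then have jn: "?j < n" using js by auto
  have lin: "is_linorder n p (P ?j)" using vp jn by (auto simp: valid_profile_def)
  have Abund: "A \<subseteq> bundles n p" unfolding A_def available_def by auto
  have dR: "distinct (P ?j)" and sR: "set (P ?j) = bundles n p" using lin by (auto simp: is_linorder_def)
  have lc: "length c = p" using cA' Aeq by auto
  have step: "\<And>m. m \<le> p \<Longrightarrow> run n p ?opt P (take m (blk p ?j)) a0
       = a0(?j := (\<lambda>l. if l < m then Some (c ! l) else None))"
  proof -
    fix m show "m \<le> p \<Longrightarrow> run n p ?opt P (take m (blk p ?j)) a0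
       = a0(?j := (\<lambda>l. if l < m then Some (c ! l) else None))"
    proof (induction m)
      case 0
      then show ?case using jnone by (auto intro!: ext)
    next
      case (Suc m)
      define am where "am = a0(?j := (\<lambda>l. if l < m then Some (c ! l) else None))"
      have tk: "take (Suc m) (blk p ?j) = take m (blk p ?j) @ [(?j, m)]"
        using Suc.prems by (simp add: blk_def take_Suc_conv_app_nth)
      have IH: "run n p ?opt P (take m (blk p ?j)) a0 = am" using Suc by (simp add: am_def fun_upd_def)
      have remm: "\<And>l. m \<le> l \<Longrightarrow> remaining n am l = remaining n a0 l"
      proof -
        fix l assume "m \<le> l"
        then have "\<forall>j'. am j' l = a0 j' l" using jnone by (simp add: am_def)
        then show "remaining n am l = remaining n a0 l" unfolding remaining_def by simp
      qed
      have avsub: "available n p am ?j \<subseteq> A"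
      proof
        fix b assume b: "b \<in> available n p am ?j"
        show "b \<in> A" unfolding A_def available_def
        proof (intro CollectI conjI allI impI)
          show "b \<in> bundles n p" using b by (simp add: available_def)
          fix l assume l: "l < p"
          have cs: "case am ?j l of Some d \<Rightarrow> b ! l = d | None \<Rightarrow> b ! l \<in> remaining n am l"
            using b l by (simp add: available_def)
          then have "b ! l \<in> remaining n a0 l"
          proof (cases "l < m")
            case True
            then have "b ! l = c ! l" using cs by (simp add: am_def)
            then show ?thesis using cA' Aeq l by auto
          next
            case False
            then show ?thesis using cs remm[of l] by (simp add: am_def)
          qed
          then show "case a0 ?j l of None \<Rightarrow> b ! l \<in> remaining n a0 l | Some d \<Rightarrow> b ! l = d"
            using jnone by simp
        qed
      qed
      have cav: "c \<in> available n p am ?j"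
        unfolding available_def
      proof (intro CollectI conjI allI impI)
        show "c \<in> bundles n p" using cA' Abund by auto
        fix l assume l: "l < p"
        show "case am ?j l of None \<Rightarrow> c ! l \<in> remaining n am l | Some d \<Rightarrow> c ! l = d"
          using cA' Aeq l remm[of l] by (auto simp: am_def)
      qed
      define g where "g = (ARG_MIN (rank (P ?j)) b. b \<in> available n p am ?j)"
      have gav: "g \<in> available n p am ?j" unfolding g_def
        by (rule arg_min_natI[of "\<lambda>b. b \<in> available n p am ?j", OF cav])
      have gle: "rank (P ?j) g \<le> rank (P ?j) c" unfolding g_def
        by (rule arg_min_nat_le[of "\<lambda>b. b \<in> available n p am ?j", OF cav])
      have "rank (P ?j) c \<le> rank (P ?j) g" using cmin avsub gav by blast
      then have "rank (P ?j) g = rank (P ?j) c" using gle by simp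
      moreover have "g \<in> set (P ?j)" "c \<in> set (P ?j)" using gav avsub cA' Abund sR by auto
      ultimately have "g = c" using rank_inj[OF dR] by blast
      then have ch: "choose_item n p ?opt (P ?j) am ?j m = c ! m"
        by (simp add: choose_item_def choose_opt_def g_def)
      show ?case unfolding tk run_snoc run_append IH using ch
        by (simp add: am_def Let_def) (auto intro!: ext)
    qed
  qed
  have afterblk: "run n p ?opt P (blk p ?j) a0 = a0(?j := (\<lambda>l. if l < p then Some (c ! l) else None))"
    using step[of p] by (simp add: blk_def)
  have jpost: "\<And>l. (?j, l) \<notin> set post"
  proof
    fix l assume "(?j,l) \<in> set post"
    then have "?j \<in> set (drop (Suc k) js)" by (auto simp: post_def blk_def)
    then obtain i where "i < length (drop (Suc k) js)" "drop (Suc k) js ! i = ?j" by (auto simp: in_set_conv_nth)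
    then have "Suc k + i < n" "js ! (Suc k + i) = js ! k" using ljs by auto
    then show False using nth_eq_iff_index_eq[OF js(1)] k ljs by force
  qed
  have "csam n p ?opt Osd P ?j = c"
  proof -
    have "\<And>i. i < p \<Longrightarrow> run n p ?opt P Osd (\<lambda>_ _. None) ?j i = Some (c ! i)"
    proof -
      fix i assume i: "i < p"
      have "run n p ?opt P Osd (\<lambda>_ _. None) ?j i = run n p ?opt P post (run n p ?opt P (blk p ?j) a0) ?j i"
        by (simp add: Odec run_append a0_def)
      also have "\<dots> = run n p ?opt P (blk p ?j) a0 ?j i" by (rule run_other[OF jpost])
      also have "\<dots> = Some (c ! i)" using afterblk i by simp
      finally show "run n p ?opt P Osd (\<lambda>_ _. None) ?j i = Some (c ! i)" .
    qed
    then show ?thesis using lc by (auto simp: csam_def intro: nth_equalityI)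
  qed
  moreover have "card A + rank (P ?j) c \<le> Suc (length (P ?j))"
    by (rule rank_card_ge[OF dR]) (use cA' Abund sR cmin in auto)
  moreover have "length (P ?j) = n ^ p" by (rule linorder_len[OF lin])
  ultimately show ?thesis using cA by simp
qed



lemma amgm_one:
  fixes y :: "nat \<Rightarrow> real" assumes p: "p \<ge> 1" and y: "\<And>l. y l \<ge> 0"
  shows "(\<Prod>l<p. y l) \<le> (\<Sum>l<p. y l ^ p) / p"
proof -
  have "(\<Prod>l\<in>{..<p}. y l ^ p) powr (1 / card {..<p}) \<le> (\<Sum>l\<in>{..<p}. y l ^ p / card {..<p})"
  proof (rule arith_geom_mean)
    have "0 \<in> {..<p}" using p by simp
    then show "{..<p} \<noteq> {}" by blast
  qed (use y in auto)
  moreover have "(\<Prod>l\<in>{..<p}. y l ^ p) = (\<Prod>l<p. y l) ^ p" by (simp add: prod_power_distrib)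
  moreover have "((\<Prod>l<p. y l) ^ p) powr (1 / p) = (\<Prod>l<p. y l)"
  proof -
    have nn: "(\<Prod>l<p. y l) \<ge> 0" using y by (simp add: prod_nonneg)
    have "((\<Prod>l<p. y l) ^ p) = (\<Prod>l<p. y l) powr (real p)" using powr_realpow'[OF nn] p by simp
    then show ?thesis using p nn by (simp add: powr_powr)
  qed
  ultimately show ?thesis by (simp add: sum_divide_distrib)
qed

lemma amgm_sum:
  fixes x :: "nat \<Rightarrow> nat \<Rightarrow> nat"
  assumes p: "p \<ge> 1" and T: "\<And>l. l < p \<Longrightarrow> (\<Sum>j<n. x j l ^ p) = T"
  shows "(\<Sum>j<n. \<Prod>l<p. x j l) \<le> T"
proof -
  have "real (\<Sum>j<n. \<Prod>l<p. x j l) = (\<Sum>j<n. \<Prod>l<p. real (x j l))" by simp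
  also have "\<dots> \<le> (\<Sum>j<n. (\<Sum>l<p. real (x j l) ^ p) / p)"
    by (intro sum_mono amgm_one[OF p]) auto
  also have "\<dots> = (\<Sum>l<p. (\<Sum>j<n. real (x j l) ^ p)) / p"
    by (simp add: sum_divide_distrib[symmetric] sum.swap[of _ "{..<n}"])
  also have "\<dots> = (\<Sum>l<p. real T) / p"
  proof -
    have "\<And>l. l \<in> {..<p} \<Longrightarrow> (\<Sum>j<n. real (x j l) ^ p) = real T"
    proof -
      fix l assume "l \<in> {..<p}"
      then have "real (\<Sum>j<n. x j l ^ p) = real T" using T by simp
      then show "(\<Sum>j<n. real (x j l) ^ p) = real T" by simp
    qed
    then have "(\<Sum>l<p. (\<Sum>j<n. real (x j l) ^ p)) = (\<Sum>l<p. real T)" by (rule sum.cong[OF refl])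
    then show ?thesis by simp
  qed
  also have "\<dots> = real T" using p by simp
  finally have "real (\<Sum>j<n. \<Prod>l<p. x j l) \<le> real T" .
  then show ?thesis by (simp only: of_nat_le_iff)
qed

lemma beta_sum:
  assumes vo: "valid_order n p Ord" and l: "l < p"
  shows "(\<Sum>j<n. (n - beta Ord j l) ^ p) = (\<Sum>k<n. (n - k) ^ p)"
  using sum.reindex_bij_betw[OF beta_bij[OF vo l], of "\<lambda>k. (n - k) ^ p"] by simp

lemma csam_sum_bound_SD:
  assumes vo: "valid_order n p Osd" and js: "distinct js" "set js = {0..<n}"
    and O: "Osd = concat (map (blk p) js)" and vp: "valid_profile n p P"
  shows "(\<Sum>j<n. rank (P j) (csam n p (\<lambda>_. True) Osd P j)) + (\<Sum>k<n. (n - k) ^ p) \<le> n * (n ^ p + 1)"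
proof -
  have ljs: "length js = n" using js distinct_card by fastforce
  have bij: "bij_betw ((!) js) {..<n} {..<n}"
    unfolding bij_betw_def
  proof
    show "inj_on ((!) js) {..<n}" using js(1) ljs by (intro inj_on_nth) auto
    show "(!) js ` {..<n} = {..<n}"
    proof (rule set_eqI)
      fix x
      have "x \<in> (!) js ` {..<n} \<longleftrightarrow> x \<in> set js" using ljs by (auto simp: in_set_conv_nth)
      then show "x \<in> (!) js ` {..<n} \<longleftrightarrow> x \<in> {..<n}" using js(2) by auto
    qed
  qed
  have "(\<Sum>j<n. rank (P j) (csam n p (\<lambda>_. True) Osd P j)) = (\<Sum>k<n. rank (P (js ! k)) (csam n p (\<lambda>_. True) Osd P (js ! k)))"
    using sum.reindex_bij_betw[OF bij, of "\<lambda>j. rank (P j) (csam n p (\<lambda>_. True) Osd P j)"] by simp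
  moreover have "(\<Sum>k<n. rank (P (js ! k)) (csam n p (\<lambda>_. True) Osd P (js ! k)) + (n - k) ^ p) \<le> (\<Sum>k<n. n ^ p + 1)"
    by (intro sum_mono sd_agent[OF vo js O _ vp]) auto
  ultimately show ?thesis by (simp add: sum.distrib)
qed

lemma csam_sum_adv:
  assumes vo: "valid_order n p Ord"
  shows "n * (n ^ p + 1) \<le> (\<Sum>j<n. rank (Padv n p Ord j) (csam n p opt Ord (Padv n p Ord) j)) + (\<Sum>j<n. \<Prod>l<p. (n - beta Ord j l))"
proof -
  have "(\<Sum>j<n. n ^ p + 1) \<le> (\<Sum>j<n. rank (Padv n p Ord j) (csam n p opt Ord (Padv n p Ord) j) + (\<Prod>l<p. (n - beta Ord j l)))"
    by (intro sum_mono adv_rank[OF vo]) auto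
  then show ?thesis by (simp add: sum.distrib)
qed

lemma util_set_props:
  assumes vo: "valid_order n p Ord"
  shows "finite {(\<Sum>j<n. rank (P j) (csam n p opt Ord P j)) | P. valid_profile n p P}"
    and "{(\<Sum>j<n. rank (P j) (csam n p opt Ord P j)) | P. valid_profile n p P} \<noteq> {}"
proof -
  show "finite {(\<Sum>j<n. rank (P j) (csam n p opt Ord P j)) | P. valid_profile n p P}"
  proof (rule finite_subset[of _ "{..n * n ^ p}"])
    show "{(\<Sum>j<n. rank (P j) (csam n p opt Ord P j)) | P. valid_profile n p P} \<subseteq> {..n * n ^ p}"
    proof
      fix x assume "x \<in> {(\<Sum>j<n. rank (P j) (csam n p opt Ord P j)) | P. valid_profile n p P}"
      then obtain P where P: "valid_profile n p P" "x = (\<Sum>j<n. rank (P j) (csam n p opt Ord P j))" by auto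
      have "x \<le> (\<Sum>j<n. n ^ p)" unfolding P(2) by (intro sum_mono) (use rank_bound[OF vo P(1)] in auto)
      then show "x \<in> {..n * n ^ p}" by simp
    qed
  qed simp
  show "{(\<Sum>j<n. rank (P j) (csam n p opt Ord P j)) | P. valid_profile n p P} \<noteq> {}"
    using Padv_lin by blast
qed

lemma egal_le:
  assumes vo: "valid_order n p Ord" and n: "n \<ge> 1"
  shows "wc_egal n p opt Ord \<le> n ^ p"
proof -
  let ?E = "{Max {rank (P j) (csam n p opt Ord P j) | j. j < n} | P. valid_profile n p P}"
  have inner: "\<And>P. valid_profile n p P \<Longrightarrow> Max {rank (P j) (csam n p opt Ord P j) | j. j < n} \<le> n ^ p"
  proof -
    fix P assume P: "valid_profile n p P"
    have eq: "{rank (P j) (csam n p opt Ord P j) | j. j < n} = (\<lambda>j. rank (P j) (csam n p opt Ord P j)) ` {..<n}"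
      by auto
    show "Max {rank (P j) (csam n p opt Ord P j) | j. j < n} \<le> n ^ p"
    proof -
      have "0 \<in> {..<n}" using n by simp
      then have "{..<n} \<noteq> {}" by blast
      then show ?thesis unfolding eq using rank_bound[OF vo P] by (subst Max_le_iff) auto
    qed
  qed
  have fin: "finite ?E" by (rule finite_subset[of _ "{..n ^ p}"]) (use inner in auto)
  have ne: "?E \<noteq> {}" using Padv_lin by blast
  show ?thesis unfolding wc_egal_def using fin ne inner by (subst Max_le_iff) auto
qed

lemma fl_blk: "l < p \<Longrightarrow> fl l (concat (map (blk p) js)) = map (\<lambda>j. (j,l)) js"
proof (induction js)
  case Nil then show ?case by (simp add: fl_def)
next
  case (Cons j js)
  have "filter (\<lambda>i. i = l) [0..<p] = [l]"
  proof -
    have "\<And>q. filter (\<lambda>i. i = l) [0..<q] = (if l < q then [l] else [])"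
    proof -
      fix q show "filter (\<lambda>i. i = l) [0..<q] = (if l < q then [l] else [])"
        by (induction q) auto
    qed
    then show ?thesis using Cons.prems by simp
  qed
  then have "fl l (blk p j) = [(j,l)]" by (simp add: fl_def blk_def filter_map comp_def)
  then show ?case using Cons by (simp add: fl_append[symmetric, of l "blk p j"] fl_def)
qed

lemma beta_SD:
  assumes js: "distinct js" and O: "Osd = concat (map (blk p) js)" and l: "l < p" and k: "k < length js"
  shows "beta Osd (js ! k) l = k"
proof -
  have "beta Osd (js ! k) l = idx (map (\<lambda>j. (j,l)) js) (js ! k, l)"
    by (simp add: beta_def O fl_blk[OF l])
  also have "\<dots> = idx js (js ! k)" by (rule idx_map) (auto simp: inj_def)
  also have "\<dots> = k"
  proof -
    have "js ! k \<in> set js" using k by simp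
    then have h: "idx js (js ! k) < length js \<and> js ! idx js (js ! k) = js ! k" by (rule idx_lt_nth)
    then have "idx js (js ! k) < length js" "js ! idx js (js ! k) = js ! k" by auto
    then show ?thesis using nth_eq_iff_index_eq[OF js _ k] by blast
  qed
  finally show ?thesis .
qed



theorem proposition2:
  fixes n p :: nat and Osd Ord :: "(nat \<times> nat) list" and opt :: "nat \<Rightarrow> bool"
  assumes "n \<ge> 1" and "p \<ge> 1"
    and "valid_order n p Osd" and "serial_dictatorship n p Osd"
    and "valid_order n p Ord"
  shows "wc_util n p (\<lambda>_. True) Osd \<le> wc_util n p opt Ord
       \<and> wc_egal n p opt Ord \<le> wc_egal n p (\<lambda>_. True) Osd
       \<and> wc_egal n p (\<lambda>_. True) Osd = n ^ p"
proof -
  note n = assms(1) and p = assms(2) and vs = assms(3) and vo = assms(5)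
  obtain js where js: "distinct js" "set js = {0..<n}"
    and O0: "Osd = concat (map (\<lambda>j. map (\<lambda>i. (j, i)) [0..<p]) js)"
    using assms(4) by (auto simp: serial_dictatorship_def)
  have bl: "blk p = (\<lambda>j. map (\<lambda>i. (j, i)) [0..<p])" by (rule ext) (simp add: blk_def)
  have O: "Osd = concat (map (blk p) js)" using O0 by (simp only: bl)
  have ljs: "length js = n" using js distinct_card by fastforce
  let ?US = "{(\<Sum>j<n. rank (P j) (csam n p (\<lambda>_. True) Osd P j)) | P. valid_profile n p P}"
  let ?UO = "{(\<Sum>j<n. rank (P j) (csam n p opt Ord P j)) | P. valid_profile n p P}"
  have finO: "finite ?UO" and neO: "?UO \<noteq> {}" using util_set_props[OF vo] by blast+
  have finS: "finite ?US" and neS: "?US \<noteq> {}" using util_set_props[OF vs] by blast+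
  have C: "(\<Sum>j<n. \<Prod>l<p. (n - beta Ord j l)) \<le> (\<Sum>k<n. (n - k) ^ p)"
    by (rule amgm_sum[OF p]) (rule beta_sum[OF vo])
  have "\<forall>x\<in>?US. x \<le> Max ?UO"
  proof
    fix x assume "x \<in> ?US"
    then obtain P where P: "valid_profile n p P" "x = (\<Sum>j<n. rank (P j) (csam n p (\<lambda>_. True) Osd P j))" by auto
    have A: "x + (\<Sum>k<n. (n - k) ^ p) \<le> n * (n ^ p + 1)"
      unfolding P(2) by (rule csam_sum_bound_SD[OF vs js O P(1)])
    have B: "n * (n ^ p + 1) \<le> (\<Sum>j<n. rank (Padv n p Ord j) (csam n p opt Ord (Padv n p Ord) j)) + (\<Sum>j<n. \<Prod>l<p. (n - beta Ord j l))"
      by (rule csam_sum_adv[OF vo])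
    have inU: "(\<Sum>j<n. rank (Padv n p Ord j) (csam n p opt Ord (Padv n p Ord) j)) \<in> ?UO"
      using Padv_lin by blast
    have "x \<le> (\<Sum>j<n. rank (Padv n p Ord j) (csam n p opt Ord (Padv n p Ord) j))" using A B C by linarith
    also have "\<dots> \<le> Max ?UO" by (rule Max_ge[OF finO inU])
    finally show "x \<le> Max ?UO" .
  qed
  then have part1: "wc_util n p (\<lambda>_. True) Osd \<le> wc_util n p opt Ord"
    unfolding wc_util_def using finS neS by (subst Max_le_iff) auto
  have le1: "wc_egal n p (\<lambda>_. True) Osd \<le> n ^ p" by (rule egal_le[OF vs n])
  have le2: "wc_egal n p opt Ord \<le> n ^ p" by (rule egal_le[OF vo n])
  have ge: "n ^ p \<le> wc_egal n p (\<lambda>_. True) Osd"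
  proof -
    let ?P = "Padv n p Osd"
    let ?j = "js ! (n - 1)"
    have kn: "n - 1 < length js" using ljs n by simp
    have jn: "?j < n" using kn js ljs nth_mem by (metis atLeastLessThan_iff)
    have "\<And>l. l < p \<Longrightarrow> beta Osd ?j l = n - 1" using beta_SD[OF js(1) O _ kn] by blast
    then have "(\<Prod>l<p. (n - beta Osd ?j l)) = 1" using n by simp
    then have r: "n ^ p \<le> rank (?P ?j) (csam n p (\<lambda>_. True) Osd ?P ?j)"
      using adv_rank[OF vs jn, of "\<lambda>_. True"] by simp
    let ?I = "{rank (?P j) (csam n p (\<lambda>_. True) Osd ?P j) | j. j < n}"
    have eq: "?I = (\<lambda>j. rank (?P j) (csam n p (\<lambda>_. True) Osd ?P j)) ` {..<n}" by auto
    have "rank (?P ?j) (csam n p (\<lambda>_. True) Osd ?P ?j) \<le> Max ?I"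
      unfolding eq by (rule Max_ge) (use jn in auto)
    moreover have "Max ?I \<in> {Max {rank (P j) (csam n p (\<lambda>_. True) Osd P j) | j. j < n} | P. valid_profile n p P}"
      using Padv_lin by blast
    moreover have "finite {Max {rank (P j) (csam n p (\<lambda>_. True) Osd P j) | j. j < n} | P. valid_profile n p P}"
    proof (rule finite_subset[of _ "{..n ^ p}"])
      show "{Max {rank (P j) (csam n p (\<lambda>_. True) Osd P j) | j. j < n} | P. valid_profile n p P} \<subseteq> {..n ^ p}"
      proof
        fix y assume "y \<in> {Max {rank (P j) (csam n p (\<lambda>_. True) Osd P j) | j. j < n} | P. valid_profile n p P}"
        then obtain P where P: "valid_profile n p P" "y = Max {rank (P j) (csam n p (\<lambda>_. True) Osd P j) | j. j < n}" by auto
        have eq2: "{rank (P j) (csam n p (\<lambda>_. True) Osd P j) | j. j < n} = (\<lambda>j. rank (P j) (csam n p (\<lambda>_. True) Osd P j)) ` {..<n}" by auto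
        have "0 \<in> {..<n}" using n by simp
        then have "{..<n} \<noteq> {}" by blast
        then have "y \<le> n ^ p" unfolding P(2) eq2 using rank_bound[OF vs P(1)] by (subst Max_le_iff) auto
        then show "y \<in> {..n ^ p}" by simp
      qed
    qed simp
    ultimately show ?thesis unfolding wc_egal_def using r by (meson Max_ge le_trans)
  qed
  show ?thesis using part1 le1 le2 ge by simp
qed


end
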